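(* Let $u$ and $v$ be two vertices of a graph $G$ such that $u\cong_m v$ and the distance between $u$ and $v$ in $G$ is more than $2m$. Then $u\cong^D_m v$, i.e. Duplicator wins the $m$-round differential game between $u$ and $v$.
   Context: Graphs are finite, simple, undirected, loopless, possibly labelled with unary predicates. $N(u)$ is the neighbourhood of $u$ and $D(u,v):=N(u)\,\Delta\,N(v)$. $u\cong_m v$ means Duplicator wins the standard $m$-round Ehrenfeucht–Fraïssé game on $(G,u)$ and $(G,v)$ (equivalently, $u,v$ satisfy the same FO formulas of quantifier rank $m$). Differential game from $(\bar a,\bar b)$ on a single graph $G$: in each round, with current tuples $(a_1,\dots,a_n),(b_1,\dots,b_n)$, Spoiler chooses $i\le n$ and $v\in D(a_i,b_i)$ and declares whether $v$ becomes $a_{n+1}$ or $b_{n+1}$ (if all $D(a_i,b_i)$ are empty, Duplicator wins); Duplicator answers with a vertex $w\in D(a_i,b_i)$ (same $i$), which becomes the other of $b_{n+1},a_{n+1}$. After the rounds, Duplicator wins iff $a_i\mapsto b_i$ is a label-preserving isomorphism between the induced subgraphs on the $a$'s and $b$'s. $u\cong^D_m v$ means Duplicator has a winning strategy in the $m$-round differential game from $((u),(v))$. *)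

theory Defs
  imports Main
begin

text \<open>A finite simple labelled graph: vertex set V, symmetric irreflexive edge
relation E on V, and labelling lab assigning to each vertex the set of unary
predicates it satisfies.\<close>

definition graph :: "'a set \<Rightarrow> ('a \<Rightarrow> 'a \<Rightarrow> bool) \<Rightarrow> bool" where
  "graph V E \<longleftrightarrow> finite V \<and> (\<forall>x y. E x y \<longrightarrow> x \<in> V \<and> y \<in> V)
     \<and> (\<forall>x y. E x y \<longrightarrow> E y x) \<and> (\<forall>x. \<not> E x x)"

definition nbhd :: "'a set \<Rightarrow> ('a \<Rightarrow> 'a \<Rightarrow> bool) \<Rightarrow> 'a \<Rightarrow> 'a set" where
  "nbhd V E u = {w \<in> V. E u w}"

definition Dset :: "'a set \<Rightarrow> ('a \<Rightarrow> 'a \<Rightarrow> bool) \<Rightarrow> 'a \<Rightarrow> 'a \<Rightarrow> 'a set" where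
  "Dset V E u v = (nbhd V E u - nbhd V E v) \<union> (nbhd V E v - nbhd V E u)"

definition partial_iso :: "('a \<Rightarrow> 'a \<Rightarrow> bool) \<Rightarrow> ('a \<Rightarrow> 'l set) \<Rightarrow> 'a list \<Rightarrow> 'a list \<Rightarrow> bool" where
  "partial_iso E lab as bs \<longleftrightarrow> length as = length bs \<and>
     (\<forall>i < length as. lab (as ! i) = lab (bs ! i)) \<and>
     (\<forall>i < length as. \<forall>j < length as.
        (as ! i = as ! j \<longleftrightarrow> bs ! i = bs ! j) \<and> (E (as ! i) (as ! j) \<longleftrightarrow> E (bs ! i) (bs ! j)))"

text \<open>Duplicator wins the standard k-round EF game from position (as, bs) on G vs G.\<close>
fun ef_win :: "'a set \<Rightarrow> ('a \<Rightarrow> 'a \<Rightarrow> bool) \<Rightarrow> ('a \<Rightarrow> 'l set) \<Rightarrow> nat \<Rightarrow> 'a list \<Rightarrow> 'a list \<Rightarrow> bool" where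
  "ef_win V E lab 0 as bs = partial_iso E lab as bs"
| "ef_win V E lab (Suc k) as bs =
     ((\<forall>x\<in>V. \<exists>y\<in>V. ef_win V E lab k (as @ [x]) (bs @ [y])) \<and>
      (\<forall>y\<in>V. \<exists>x\<in>V. ef_win V E lab k (as @ [x]) (bs @ [y])))"

definition ef_equiv :: "'a set \<Rightarrow> ('a \<Rightarrow> 'a \<Rightarrow> bool) \<Rightarrow> ('a \<Rightarrow> 'l set) \<Rightarrow> nat \<Rightarrow> 'a \<Rightarrow> 'a \<Rightarrow> bool" where
  "ef_equiv V E lab m u v \<longleftrightarrow> ef_win V E lab m [u] [v]"

text \<open>Duplicator wins the k-round differential game from position (as, bs).
If all D(a_i,b_i) are empty when a round is to be played, Duplicator wins.\<close>
fun diff_win :: "'a set \<Rightarrow> ('a \<Rightarrow> 'a \<Rightarrow> bool) \<Rightarrow> ('a \<Rightarrow> 'l set) \<Rightarrow> nat \<Rightarrow> 'a list \<Rightarrow> 'a list \<Rightarrow> bool" where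
  "diff_win V E lab 0 as bs = partial_iso E lab as bs"
| "diff_win V E lab (Suc k) as bs =
     ((\<forall>i < length as. Dset V E (as ! i) (bs ! i) = {}) \<or>
      (\<forall>i < length as. \<forall>x \<in> Dset V E (as ! i) (bs ! i).
         (\<exists>y \<in> Dset V E (as ! i) (bs ! i). diff_win V E lab k (as @ [x]) (bs @ [y])) \<and>
         (\<exists>y \<in> Dset V E (as ! i) (bs ! i). diff_win V E lab k (as @ [y]) (bs @ [x]))))"

definition diff_equiv :: "'a set \<Rightarrow> ('a \<Rightarrow> 'a \<Rightarrow> bool) \<Rightarrow> ('a \<Rightarrow> 'l set) \<Rightarrow> nat \<Rightarrow> 'a \<Rightarrow> 'a \<Rightarrow> bool" where
  "diff_equiv V E lab m u v \<longleftrightarrow> diff_win V E lab m [u] [v]"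

fun within_dist :: "('a \<Rightarrow> 'a \<Rightarrow> bool) \<Rightarrow> nat \<Rightarrow> 'a \<Rightarrow> 'a \<Rightarrow> bool" where
  "within_dist E 0 u v = (u = v)"
| "within_dist E (Suc k) u v = (u = v \<or> (\<exists>w. E u w \<and> within_dist E k w v))"

end

theory Submission
  imports Defs
begin

lemma wd_snoc: "within_dist E j a b \<Longrightarrow> E b c \<Longrightarrow> within_dist E (Suc j) a c"
proof (induction j arbitrary: a)
  case 0 then show ?case by auto
next
  case (Suc j) then show ?case by (metis within_dist.simps(1) within_dist.simps(2))
qed

lemma wd_mono: "within_dist E j a b \<Longrightarrow> j \<le> l \<Longrightarrow> within_dist E l a b"
proof (induction j arbitrary: a l)
  case 0 then show ?case by (cases l) auto
next
  case (Suc j) then show ?case by (cases l) auto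
qed

lemma wd_trans: "within_dist E j a b \<Longrightarrow> within_dist E l b c \<Longrightarrow> within_dist E (j + l) a c"
proof (induction j arbitrary: a)
  case 0 then show ?case by auto
next
  case (Suc j)
  show ?case
  proof (cases "a = b")
    case True then show ?thesis using Suc.prems(2) wd_mono[of E l b c "Suc j + l"] by auto
  next
    case False then obtain w where "E a w" "within_dist E j w b" using Suc.prems(1) by auto
    then show ?thesis using Suc.IH[of w] Suc.prems(2) by auto
  qed
qed

lemma wd_sym: "(\<forall>x y. E x y \<longrightarrow> E y x) \<Longrightarrow> within_dist E j a b \<Longrightarrow> within_dist E j b a"
proof (induction j arbitrary: a b)
  case 0 then show ?case by auto
next
  case (Suc j)
  show ?case
  proof (cases "a = b")
    case True then show ?thesis by auto
  next
    case False then obtain w where "E a w" "within_dist E j w b" using Suc.prems(2) by auto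
    then show ?thesis using Suc.IH[of w b] Suc.prems(1) wd_snoc[of E j b w a] by auto
  qed
qed

lemma far:
  assumes sym: "\<forall>x y. E x y \<longrightarrow> E y x" and nd: "\<not> within_dist E (2*m) u v"
    and c: "within_dist E j u c" and d: "within_dist E l v d" and jl: "j + l + 1 \<le> 2*m"
  shows "c \<noteq> d \<and> \<not> E c d"
proof
  have dv: "within_dist E l d v" using wd_sym[OF sym d] .
  show "c \<noteq> d"
  proof
    assume "c = d"
    then have "within_dist E (j + l) u v" using wd_trans[OF c] dv by auto
    then show False using nd wd_mono jl by (metis add_leD1)
  qed
  show "\<not> E c d"
  proof
    assume "E c d"
    then have "within_dist E (Suc j) u d" using wd_snoc[OF c] by auto
    then have "within_dist E (Suc j + l) u v" using wd_trans dv by metis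
    then show False using nd wd_mono jl by (metis Suc_eq_plus1 add.commute add.left_commute)
  qed
qed

lemma iso_prefix: "partial_iso E lab (as @ [x]) (bs @ [y]) \<Longrightarrow> partial_iso E lab as bs"
proof -
  assume h: "partial_iso E lab (as @ [x]) (bs @ [y])"
  have l: "length as = length bs" using h unfolding partial_iso_def by simp
  have a: "(as @ [x]) ! i = as ! i" "(bs @ [y]) ! i = bs ! i" if "i < length as" for i
    using that l by (auto simp: nth_append)
  show ?thesis unfolding partial_iso_def
  proof (intro conjI allI impI)
    fix i j assume i: "i < length as" and j: "j < length as"
    have "lab ((as @ [x]) ! i) = lab ((bs @ [y]) ! i)" using h i unfolding partial_iso_def by simp
    then show "lab (as ! i) = lab (bs ! i)" using a i by simp
    have "((as @ [x]) ! i = (as @ [x]) ! j \<longleftrightarrow> (bs @ [y]) ! i = (bs @ [y]) ! j) \<and>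
      (E ((as @ [x]) ! i) ((as @ [x]) ! j) \<longleftrightarrow> E ((bs @ [y]) ! i) ((bs @ [y]) ! j))"
      using h i j unfolding partial_iso_def by simp
    then show "(as ! i = as ! j) = (bs ! i = bs ! j)" "E (as ! i) (as ! j) = E (bs ! i) (bs ! j)"
      using a i j by simp_all
  qed (use l in simp)
qed

lemma ef_iso: "ef_win V E lab k as bs \<Longrightarrow> V \<noteq> {} \<Longrightarrow> partial_iso E lab as bs"
proof (induction k arbitrary: as bs)
  case 0 then show ?case by simp
next
  case (Suc k)
  obtain x where "x \<in> V" using Suc.prems(2) by auto
  then obtain y where "ef_win V E lab k (as @ [x]) (bs @ [y])" using Suc.prems(1) by auto
  then show ?case using Suc.IH Suc.prems(2) iso_prefix by metis
qed

definition sel :: "bool list \<Rightarrow> 'a list \<Rightarrow> 'a list \<Rightarrow> 'a list" where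
  "sel os cs ds = map (\<lambda>(b, c, d). if b then c else d) (zip os (zip cs ds))"

lemma sel_len: "length os = n \<Longrightarrow> length cs = n \<Longrightarrow> length ds = n \<Longrightarrow> length (sel os cs ds) = n"
  by (simp add: sel_def)

lemma sel_nth: "length os = n \<Longrightarrow> length cs = n \<Longrightarrow> length ds = n \<Longrightarrow> j < n \<Longrightarrow>
  sel os cs ds ! j = (if os ! j then cs ! j else ds ! j)"
  by (simp add: sel_def)

lemma sel_snoc: "length os = length cs \<Longrightarrow> length cs = length ds \<Longrightarrow>
  sel (os @ [b]) (cs @ [c]) (ds @ [d]) = sel os cs ds @ [if b then c else d]"
  by (simp add: sel_def)

lemma Dset_sym: "Dset V E c d = Dset V E d c"
  unfolding Dset_def by blast

lemma step:
  assumes g: "graph V E" and nd: "\<not> within_dist E (2*m) u v"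
    and x: "x \<in> Dset V E c d" and wc: "within_dist E i u c" and wd: "within_dist E i v d"
    and im: "2*i + 2 \<le> 2*m" and ef: "ef_win V E lab (Suc k) cs ds"
    and ci: "cs ! i = c" and di: "ds ! i = d" and il: "i < length cs" and len: "length cs = length ds"
  shows "\<exists>c' d' y. y \<in> Dset V E c d \<and> ((c' = x \<and> d' = y) \<or> (c' = y \<and> d' = x))
     \<and> ef_win V E lab k (cs @ [c']) (ds @ [d'])
     \<and> within_dist E (Suc i) u c' \<and> within_dist E (Suc i) v d'"
proof -
  have sym: "\<forall>x y. E x y \<longrightarrow> E y x" using g unfolding graph_def by auto
  have inV: "\<forall>x y. E x y \<longrightarrow> x \<in> V \<and> y \<in> V" using g unfolding graph_def by auto
  have xV: "x \<in> V" using x unfolding Dset_def nbhd_def by auto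
  have Vne: "V \<noteq> {}" using xV by auto
  have "E c x \<and> \<not> E d x \<or> E d x \<and> \<not> E c x" using x unfolding Dset_def nbhd_def by auto
  then show ?thesis
  proof
    assume cx: "E c x \<and> \<not> E d x"
    obtain y where yV: "y \<in> V" and e: "ef_win V E lab k (cs @ [x]) (ds @ [y])"
      using ef xV by auto
    have pi: "partial_iso E lab (cs @ [x]) (ds @ [y])" using ef_iso[OF e Vne] .
    have "E ((cs @ [x]) ! i) ((cs @ [x]) ! length cs) \<longleftrightarrow> E ((ds @ [y]) ! i) ((ds @ [y]) ! length cs)"
      using pi il unfolding partial_iso_def by auto
    then have dy: "E d y" using cx ci di il len by (auto simp: nth_append)
    have wx: "within_dist E (Suc i) u x" using wd_snoc[OF wc] cx by auto
    have wy: "within_dist E (Suc i) v y" using wd_snoc[OF wd dy] .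
    have "\<not> E c y"
    proof
      assume "E c y"
      then have "within_dist E (Suc i) u y" using wd_snoc[OF wc] by auto
      then have "\<not> E y d" using far[OF sym nd _ wd, of "Suc i" y] im by simp
      then show False using dy sym by auto
    qed
    then have "y \<in> Dset V E c d" using dy yV unfolding Dset_def nbhd_def by auto
    then show ?thesis using e wx wy by blast
  next
    assume dx: "E d x \<and> \<not> E c x"
    obtain y where yV: "y \<in> V" and e: "ef_win V E lab k (cs @ [y]) (ds @ [x])"
      using ef xV by auto
    have pi: "partial_iso E lab (cs @ [y]) (ds @ [x])" using ef_iso[OF e Vne] .
    have "E ((cs @ [y]) ! i) ((cs @ [y]) ! length cs) \<longleftrightarrow> E ((ds @ [x]) ! i) ((ds @ [x]) ! length cs)"
      using pi il unfolding partial_iso_def by auto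
    then have cy: "E c y" using dx ci di il len by (auto simp: nth_append)
    have wx: "within_dist E (Suc i) v x" using wd_snoc[OF wd] dx by auto
    have wy: "within_dist E (Suc i) u y" using wd_snoc[OF wc cy] .
    have "\<not> E d y"
    proof
      assume "E d y"
      then have "within_dist E (Suc i) v y" using wd_snoc[OF wd] by auto
      then have "\<not> E c y" using far[OF sym nd wc, of "Suc i" y] im by simp
      then show False using cy by auto
    qed
    then have "y \<in> Dset V E c d" using cy yV unfolding Dset_def nbhd_def by auto
    then show ?thesis using e wx wy by blast
  qed
qed

lemma main:
  assumes g: "graph V E" and nd: "\<not> within_dist E (2*m) u v"
  shows "length cs = n \<Longrightarrow> length ds = n \<Longrightarrow> length os = n \<Longrightarrow> n + k = m + 1 \<Longrightarrow>
    ef_win V E lab k cs ds \<Longrightarrow>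
    (\<forall>j<n. within_dist E j u (cs ! j) \<and> within_dist E j v (ds ! j)) \<Longrightarrow> V \<noteq> {} \<Longrightarrow>
    diff_win V E lab k (sel os cs ds) (sel os ds cs)"
proof (induction k arbitrary: n cs ds os)
  case 0
  have sym: "\<forall>x y. E x y \<longrightarrow> E y x" using g unfolding graph_def by auto
  have pi: "partial_iso E lab cs ds" using 0 by simp
  have cross: "cs ! i \<noteq> ds ! j \<and> \<not> E (cs ! i) (ds ! j) \<and> \<not> E (ds ! j) (cs ! i)"
    if "i < n" "j < n" "i \<noteq> j" for i j
  proof -
    have "i + j + 1 \<le> 2 * m" using that 0 by auto
    then show ?thesis using far[OF sym nd, of i "cs ! i" j "ds ! j"] 0(6) that sym by auto
  qed
  show ?case
    unfolding diff_win.simps partial_iso_def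
  proof (intro conjI allI impI)
    show "length (sel os cs ds) = length (sel os ds cs)" using 0 by (simp add: sel_len)
  next
    fix i assume "i < length (sel os cs ds)"
    then show "lab (sel os cs ds ! i) = lab (sel os ds cs ! i)"
      using pi 0 by (simp add: sel_len sel_nth partial_iso_def)
  next
    fix i j assume i: "i < length (sel os cs ds)" and j: "j < length (sel os cs ds)"
    then have i': "i < n" and j': "j < n" using 0 by (auto simp: sel_len)
    have p1: "(cs ! i = cs ! j \<longleftrightarrow> ds ! i = ds ! j) \<and> (E (cs ! i) (cs ! j) \<longleftrightarrow> E (ds ! i) (ds ! j))"
      using pi i' j' 0 unfolding partial_iso_def by auto
    have s: "sel os cs ds ! i = (if os ! i then cs ! i else ds ! i)"
      "sel os cs ds ! j = (if os ! j then cs ! j else ds ! j)"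
      "sel os ds cs ! i = (if os ! i then ds ! i else cs ! i)"
      "sel os ds cs ! j = (if os ! j then ds ! j else cs ! j)"
      using i' j' 0 by (auto simp: sel_nth)
    show "(sel os cs ds ! i = sel os cs ds ! j) = (sel os ds cs ! i = sel os ds cs ! j)"
    proof (cases "i = j")
      case True then show ?thesis by simp
    next
      case False
      then have c1: "cs ! i \<noteq> ds ! j" "cs ! j \<noteq> ds ! i" using cross[OF i' j'] cross[OF j' i'] by auto
      show ?thesis unfolding s using p1 c1 by auto
    qed
    show "E (sel os cs ds ! i) (sel os cs ds ! j) = E (sel os ds cs ! i) (sel os ds cs ! j)"
    proof (cases "i = j")
      case True then show ?thesis unfolding s using p1 by auto
    next
      case False
      then have c1: "\<not> E (cs ! i) (ds ! j)" "\<not> E (ds ! j) (cs ! i)" "\<not> E (cs ! j) (ds ! i)" "\<not> E (ds ! i) (cs ! j)"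
        using cross[OF i' j'] cross[OF j' i'] by auto
      show ?thesis unfolding s using p1 c1 by auto
    qed
  qed
next
  case (Suc k)
  let ?as = "sel os cs ds" and ?bs = "sel os ds cs"
  show ?case
    unfolding diff_win.simps
  proof (rule disjI2, intro allI impI ballI)
    fix i x assume i: "i < length ?as" and x: "x \<in> Dset V E (?as ! i) (?bs ! i)"
    then have i': "i < n" using Suc by (simp add: sel_len)
    have D: "Dset V E (?as ! i) (?bs ! i) = Dset V E (cs ! i) (ds ! i)"
      using Suc i' by (auto simp: sel_nth Dset_sym)
    have x': "x \<in> Dset V E (cs ! i) (ds ! i)" using x D by simp
    have w: "within_dist E i u (cs ! i)" "within_dist E i v (ds ! i)" using Suc.prems(6) i' by auto
    have im: "2*i + 2 \<le> 2*m" using i' Suc.prems(4) by auto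
    obtain c' d' y where y: "y \<in> Dset V E (cs ! i) (ds ! i)"
      and cd: "(c' = x \<and> d' = y) \<or> (c' = y \<and> d' = x)"
      and e: "ef_win V E lab k (cs @ [c']) (ds @ [d'])"
      and wc: "within_dist E (Suc i) u c'" and wd: "within_dist E (Suc i) v d'"
      using step[OF g nd x' w im Suc.prems(5) refl refl] i' Suc.prems by auto
    have W: "\<forall>j<Suc n. within_dist E j u ((cs @ [c']) ! j) \<and> within_dist E j v ((ds @ [d']) ! j)"
    proof (intro allI impI)
      fix j assume j: "j < Suc n"
      show "within_dist E j u ((cs @ [c']) ! j) \<and> within_dist E j v ((ds @ [d']) ! j)"
      proof (cases "j < n")
        case True then show ?thesis using Suc.prems by (auto simp: nth_append)
      next
        case False then have "j = n" using j by auto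
        then show ?thesis using wc wd wd_mono[of E "Suc i" u c' n] wd_mono[of E "Suc i" v d' n] i' Suc.prems
          by (auto simp: nth_append)
      qed
    qed
    have IH: "diff_win V E lab k (sel (os @ [b]) (cs @ [c']) (ds @ [d'])) (sel (os @ [b]) (ds @ [d']) (cs @ [c']))" for b
      using Suc.IH[of "cs @ [c']" "Suc n" "ds @ [d']" "os @ [b]"] Suc.prems e W by auto
    have S: "sel (os @ [b]) (cs @ [c']) (ds @ [d']) = ?as @ [if b then c' else d']"
      "sel (os @ [b]) (ds @ [d']) (cs @ [c']) = ?bs @ [if b then d' else c']" for b
      using Suc.prems by (auto simp: sel_snoc)
    have yD: "y \<in> Dset V E (?as ! i) (?bs ! i)" using y D by simp
    show "(\<exists>y\<in>Dset V E (?as ! i) (?bs ! i). diff_win V E lab k (?as @ [x]) (?bs @ [y])) \<and>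
          (\<exists>y\<in>Dset V E (?as ! i) (?bs ! i). diff_win V E lab k (?as @ [y]) (?bs @ [x]))"
      using cd
    proof
      assume h: "c' = x \<and> d' = y"
      show ?thesis using IH[of True] IH[of False] S[of True] S[of False] h yD by auto
    next
      assume h: "c' = y \<and> d' = x"
      show ?thesis using IH[of True] IH[of False] S[of True] S[of False] h yD by auto
    qed
  qed
qed

theorem lemma6p2:
  fixes V :: "'a set" and E :: "'a \<Rightarrow> 'a \<Rightarrow> bool" and lab :: "'a \<Rightarrow> 'l set"
    and u v :: 'a and m :: nat
  assumes "graph V E" and "u \<in> V" and "v \<in> V"
    and "ef_equiv V E lab m u v"
    and "\<not> within_dist E (2 * m) u v"
  shows "diff_equiv V E lab m u v"
proof -
  have "diff_win V E lab m (sel [True] [u] [v]) (sel [True] [v] [u])"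
    using main[OF assms(1) assms(5), of "[u]" 1 "[v]" "[True]" m lab] assms
    by (auto simp: ef_equiv_def)
  then show ?thesis by (simp add: diff_equiv_def sel_def)
qed

end
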